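(* Let $\mathbb{K}$ be a field, $q\in\mathbb{K}^*$ not a root of unity, and $R=\mathcal{O}_q(M_3)$. Let $\sigma$ be a $\mathbb{K}$-algebra automorphism of $R$ such that $\sigma(Y_{i,\alpha})-Y_{i,\alpha}\in R_{\ge2}$ for all $(i,\alpha)\in\{1,2,3\}^2$, and let $[I|\Lambda]$ be a $t\times t$ quantum minor. Then $\sigma([I|\Lambda])-[I|\Lambda]\in R_{\ge t+1}$. Consequently, $\sigma([I|\Lambda])=[I|\Lambda]$ if and only if $\deg(\sigma([I|\Lambda]))=t$.
   Context: $\mathcal{O}_q(M_3)$ is the $\mathbb{K}$-algebra generated by $Y_{i,\alpha}$, $1\le i,\alpha\le 3$, subject to: $Y_{i,\beta}Y_{i,\alpha}=q^{-1}Y_{i,\alpha}Y_{i,\beta}$ for $\alpha<\beta$; $Y_{j,\alpha}Y_{i,\alpha}=q^{-1}Y_{i,\alpha}Y_{j,\alpha}$ for $i<j$; $Y_{j,\beta}Y_{i,\alpha}=Y_{i,\alpha}Y_{j,\beta}$ for $i<j$, $\alpha>\beta$; $Y_{j,\beta}Y_{i,\alpha}=Y_{i,\alpha}Y_{j,\beta}-(q-q^{-1})Y_{i,\beta}Y_{j,\alpha}$ for $i<j$, $\alpha<\beta$. It is $\mathbb{N}$-graded $R=\bigoplus R_i$ with each $Y_{i,\alpha}$ of degree 1; $R_{\ge d}=\bigoplus_{i\ge d}R_i$; for nonzero $x\in R$, $\deg(x)$ is the largest $d$ with nonzero component of $x$ in $R_d$. For $I=\{i_1<\dots<i_t\}$,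 $\Lambda=\{\alpha_1<\dots<\alpha_t\}\subseteq\{1,2,3\}$, the quantum minor is $[I|\Lambda]=\sum_{w\in S_t}(-q)^{l(w)}Y_{i_1,\alpha_{w(1)}}\cdots Y_{i_t,\alpha_{w(t)}}$. *)

theory Defs
  imports "HOL-Combinatorics.Permutations"
begin

text \<open>The free K-algebra on the generators Y(i,a), 1 <= i,a <= 3: elements are
 finitely supported functions from words (lists of generator indices) to K.\<close>

type_synonym 'k fa = "(nat \<times> nat) list \<Rightarrow> 'k"

definition gens :: "(nat \<times> nat) set" where
  "gens = {1..3} \<times> {1..3}"

definition fa_set :: "'k::field fa set" where
  "fa_set = {f. finite {w. f w \<noteq> 0} \<and> (\<forall>w. f w \<noteq> 0 \<longrightarrow> set w \<subseteq> gens)}"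

definition fzero :: "'k::field fa" where "fzero = (\<lambda>w. 0)"
definition fadd :: "'k::field fa \<Rightarrow> 'k fa \<Rightarrow> 'k fa" where "fadd f g = (\<lambda>w. f w + g w)"
definition fdiff :: "'k::field fa \<Rightarrow> 'k fa \<Rightarrow> 'k fa" where "fdiff f g = (\<lambda>w. f w - g w)"
definition fsmult :: "'k::field \<Rightarrow> 'k fa \<Rightarrow> 'k fa" where "fsmult c f = (\<lambda>w. c * f w)"

definition fmul :: "'k::field fa \<Rightarrow> 'k fa \<Rightarrow> 'k fa" where
  "fmul f g = (\<lambda>w. \<Sum>i\<le>length w. f (take i w) * g (drop i w))"

definition mono :: "(nat \<times> nat) list \<Rightarrow> 'k::field fa" where
  "mono w = (\<lambda>u. if u = w then 1 else 0)"

definition Yf :: "nat \<Rightarrow> nat \<Rightarrow> 'k::field fa" where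
  "Yf i a = mono [(i, a)]"

definition rels :: "'k::field \<Rightarrow> 'k fa set" where
  "rels q =
     {fdiff (fmul (Yf i b) (Yf i a)) (fsmult (inverse q) (fmul (Yf i a) (Yf i b))) | i a b.
        i \<in> {1..3} \<and> a \<in> {1..3} \<and> b \<in> {1..3} \<and> a < b}
   \<union> {fdiff (fmul (Yf j a) (Yf i a)) (fsmult (inverse q) (fmul (Yf i a) (Yf j a))) | i j a.
        i \<in> {1..3} \<and> j \<in> {1..3} \<and> a \<in> {1..3} \<and> i < j}
   \<union> {fdiff (fmul (Yf j b) (Yf i a)) (fmul (Yf i a) (Yf j b)) | i j a b.
        i \<in> {1..3} \<and> j \<in> {1..3} \<and> a \<in> {1..3} \<and> b \<in> {1..3} \<and> i < j \<and> a > b}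
   \<union> {fadd (fdiff (fmul (Yf j b) (Yf i a)) (fmul (Yf i a) (Yf j b)))
           (fsmult (q - inverse q) (fmul (Yf i b) (Yf j a))) | i j a b.
        i \<in> {1..3} \<and> j \<in> {1..3} \<and> a \<in> {1..3} \<and> b \<in> {1..3} \<and> i < j \<and> a < b}"

inductive_set ideal :: "'k::field \<Rightarrow> 'k fa set" for q :: "'k" where
  gen: "r \<in> rels q \<Longrightarrow> r \<in> ideal q"
| zero: "fzero \<in> ideal q"
| add: "f \<in> ideal q \<Longrightarrow> g \<in> ideal q \<Longrightarrow> fadd f g \<in> ideal q"
| smult: "f \<in> ideal q \<Longrightarrow> fsmult c f \<in> ideal q"
| mult: "f \<in> ideal q \<Longrightarrow> a \<in> fa_set \<Longrightarrow> b \<in> fa_set \<Longrightarrow> fmul (fmul a f) b \<in> ideal q"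

text \<open>The quotient R = O_q(M_3): elements are residue classes.\<close>
definition cls :: "'k::field \<Rightarrow> 'k fa \<Rightarrow> 'k fa set" where
  "cls q f = {g \<in> fa_set. fdiff f g \<in> ideal q}"

definition Rcar :: "'k::field \<Rightarrow> 'k fa set set" where
  "Rcar q = cls q ` fa_set"

definition rep :: "'k::field fa set \<Rightarrow> 'k fa" where
  "rep X = (SOME f. f \<in> X)"

definition radd :: "'k::field \<Rightarrow> 'k fa set \<Rightarrow> 'k fa set \<Rightarrow> 'k fa set" where
  "radd q X Y = cls q (fadd (rep X) (rep Y))"
definition rsub :: "'k::field \<Rightarrow> 'k fa set \<Rightarrow> 'k fa set \<Rightarrow> 'k fa set" where
  "rsub q X Y = cls q (fdiff (rep X) (rep Y))"
definition rmul :: "'k::field \<Rightarrow> 'k fa set \<Rightarrow> 'k fa set \<Rightarrow> 'k fa set" where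
  "rmul q X Y = cls q (fmul (rep X) (rep Y))"
definition rsmult :: "'k::field \<Rightarrow> 'k \<Rightarrow> 'k fa set \<Rightarrow> 'k fa set" where
  "rsmult q c X = cls q (fsmult c (rep X))"
definition rone :: "'k::field \<Rightarrow> 'k fa set" where
  "rone q = cls q (mono [])"
definition rzero :: "'k::field \<Rightarrow> 'k fa set" where
  "rzero q = cls q fzero"

definition Y :: "'k::field \<Rightarrow> nat \<Rightarrow> nat \<Rightarrow> 'k fa set" where
  "Y q i a = cls q (Yf i a)"

definition alg_aut :: "'k::field \<Rightarrow> ('k fa set \<Rightarrow> 'k fa set) \<Rightarrow> bool" where
  "alg_aut q \<sigma> \<longleftrightarrow> bij_betw \<sigma> (Rcar q) (Rcar q)
     \<and> (\<forall>X\<in>Rcar q. \<forall>Z\<in>Rcar q. \<sigma> (radd q X Z) = radd q (\<sigma> X) (\<sigma> Z))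
     \<and> (\<forall>X\<in>Rcar q. \<forall>Z\<in>Rcar q. \<sigma> (rmul q X Z) = rmul q (\<sigma> X) (\<sigma> Z))
     \<and> (\<forall>c. \<forall>X\<in>Rcar q. \<sigma> (rsmult q c X) = rsmult q c (\<sigma> X))
     \<and> \<sigma> (rone q) = rone q"

definition hpart :: "nat \<Rightarrow> 'k::field fa \<Rightarrow> 'k fa" where
  "hpart d f = (\<lambda>w. if length w = d then f w else 0)"

definition Rge :: "'k::field \<Rightarrow> nat \<Rightarrow> 'k fa set set" where
  "Rge q d = cls q ` {f \<in> fa_set. \<forall>w. f w \<noteq> 0 \<longrightarrow> d \<le> length w}"

definition rcomp :: "'k::field \<Rightarrow> nat \<Rightarrow> 'k fa set \<Rightarrow> 'k fa set" where
  "rcomp q d X = cls q (hpart d (rep X))"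

definition rdeg :: "'k::field \<Rightarrow> 'k fa set \<Rightarrow> nat" where
  "rdeg q X = (GREATEST d. rcomp q d X \<noteq> rzero q)"

definition qminor_fa :: "'k::field \<Rightarrow> nat set \<Rightarrow> nat set \<Rightarrow> 'k fa" where
  "qminor_fa q I L = (let is = sorted_list_of_set I; as = sorted_list_of_set L; t = card I in
     (\<lambda>u. \<Sum>p \<in> {p. p permutes {..<t}}.
        (- q) ^ card {(i, j). i < j \<and> j < t \<and> p j < p i}
        * mono (map (\<lambda>k. (is ! k, as ! p k)) [0..<t]) u))"

definition qminor :: "'k::field \<Rightarrow> nat set \<Rightarrow> nat set \<Rightarrow> 'k fa set" where
  "qminor q I L = cls q (qminor_fa q I L)"

end

theory Submission
  imports Defs
begin


abbreviation supp :: "'k::field fa \<Rightarrow> (nat\<times>nat) list set" where "supp f \<equiv> {w. f w \<noteq> 0}"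

lemma fa_setI: "finite (supp f) \<Longrightarrow> (\<And>w. f w \<noteq> 0 \<Longrightarrow> set w \<subseteq> gens) \<Longrightarrow> f \<in> fa_set"
  by (auto simp: fa_set_def)

lemma fa_set_fin: "f \<in> fa_set \<Longrightarrow> finite (supp f)" by (auto simp: fa_set_def)
lemma fa_set_gens: "f \<in> fa_set \<Longrightarrow> f w \<noteq> 0 \<Longrightarrow> set w \<subseteq> gens" by (auto simp: fa_set_def)

lemma fzero_fa[simp]: "fzero \<in> fa_set" by (auto simp: fa_set_def fzero_def)

lemma fadd_fa: "f \<in> fa_set \<Longrightarrow> g \<in> fa_set \<Longrightarrow> fadd f g \<in> fa_set"
proof (rule fa_setI)
  assume a: "f \<in> fa_set" "g \<in> fa_set"
  have "supp (fadd f g) \<subseteq> supp f \<union> supp g" by (auto simp: fadd_def)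
  thus "finite (supp (fadd f g))" using a fa_set_fin finite_subset by blast
  show "fadd f g w \<noteq> 0 \<Longrightarrow> set w \<subseteq> gens" for w using a fa_set_gens[of f w] fa_set_gens[of g w]
    by (cases "f w = 0") (auto simp: fadd_def)
qed

lemma fsmult_fa: "f \<in> fa_set \<Longrightarrow> fsmult c f \<in> fa_set"
proof (rule fa_setI)
  assume a: "f \<in> fa_set"
  have "supp (fsmult c f) \<subseteq> supp f" by (auto simp: fsmult_def)
  thus "finite (supp (fsmult c f))" using a fa_set_fin finite_subset by blast
  show "fsmult c f w \<noteq> 0 \<Longrightarrow> set w \<subseteq> gens" for w using a fa_set_gens[of f w]
    by (auto simp: fsmult_def)
qed

lemma fdiff_eq: "fdiff f g = fadd f (fsmult (-1) g)"
  by (simp add: fdiff_def fadd_def fsmult_def fun_eq_iff)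

lemma fdiff_fa: "f \<in> fa_set \<Longrightarrow> g \<in> fa_set \<Longrightarrow> fdiff f g \<in> fa_set"
  by (simp add: fdiff_eq fadd_fa fsmult_fa)

lemma fmul_supp: "supp (fmul f g) \<subseteq> (\<lambda>(u,v). u @ v) ` (supp f \<times> supp g)"
proof
  fix w assume "w \<in> supp (fmul f g)"
  then obtain i where "i \<le> length w" "f (take i w) * g (drop i w) \<noteq> 0"
    unfolding fmul_def by (auto elim: sum.not_neutral_contains_not_neutral)
  thus "w \<in> (\<lambda>(u,v). u @ v) ` (supp f \<times> supp g)"
    by (auto intro!: image_eqI[where x="(take i w, drop i w)"])
qed

lemma fmul_fa: "f \<in> fa_set \<Longrightarrow> g \<in> fa_set \<Longrightarrow> fmul f g \<in> fa_set"
proof (rule fa_setI)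
  assume a: "f \<in> fa_set" "g \<in> fa_set"
  show "finite (supp (fmul f g))"
    by (rule finite_subset[OF fmul_supp]) (use a fa_set_fin in auto)
  fix w assume "fmul f g w \<noteq> 0"
  then have "w \<in> (\<lambda>(u,v). u @ v) ` (supp f \<times> supp g)" using fmul_supp by blast
  then obtain u v where "w = u @ v" "f u \<noteq> 0" "g v \<noteq> 0" by auto
  thus "set w \<subseteq> gens" using a fa_set_gens by fastforce
qed

lemma mono_fa: "set w \<subseteq> gens \<Longrightarrow> mono w \<in> fa_set"
  by (rule fa_setI) (auto simp: mono_def split: if_splits)

lemma Yf_fa: "i \<in> {1..3} \<Longrightarrow> a \<in> {1..3} \<Longrightarrow> Yf i a \<in> fa_set"
  by (simp add: Yf_def mono_fa gens_def)

lemma fmul_one_right: "fmul h (mono []) = h"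
proof
  fix w
  have "fmul h (mono []) w = (\<Sum>i\<le>length w. if i = length w then h (take i w) else 0)"
    unfolding fmul_def mono_def by (intro sum.cong) auto
  also have "\<dots> = h w" by simp
  finally show "fmul h (mono []) w = h w" .
qed

lemma fmul_one_left: "fmul (mono []) h = h"
proof
  fix w
  have "fmul (mono []) h w = (\<Sum>i\<le>length w. if i = 0 then h (drop i w) else 0)"
    unfolding fmul_def mono_def by (intro sum.cong) auto
  also have "\<dots> = h w" by simp
  finally show "fmul (mono []) h w = h w" .
qed

lemma fmul_mono: "fmul (mono u) (mono v) = (mono (u @ v) :: 'k::field fa)"
proof
  fix w
  have eq: "(if take i w = u then 1 else 0) * (if drop i w = v then 1 else 0) = (if i = length u \<and> w = u @ v then 1 else (0::'k))"
    if "i \<le> length w" for i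
    proof (cases "i = length u \<and> w = u @ v")
      case True thus ?thesis by simp
    next
      case False
      have "\<not> (take i w = u \<and> drop i w = v)"
      proof
        assume h: "take i w = u \<and> drop i w = v"
        hence "w = u @ v" by (metis append_take_drop_id)
        moreover have "i = length u" using h that by auto
        ultimately show False using False by simp
      qed
      thus ?thesis using False by auto
    qed
  have "fmul (mono u) (mono v) w = (\<Sum>i\<le>length w. if i = length u \<and> w = u @ v then 1 else (0::'k))"
    unfolding fmul_def mono_def by (intro sum.cong refl) (simp add: eq)
  also have "\<dots> = mono (u @ v) w" by (auto simp: mono_def)
  finally show "(fmul (mono u) (mono v) w :: 'k) = mono (u @ v) w" .
qed

lemma fmul_distL: "fmul (fadd f g) h = fadd (fmul f h) (fmul g h)"
  by (simp add: fmul_def fadd_def fun_eq_iff algebra_simps sum.distrib)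
lemma fmul_distR: "fmul h (fadd f g) = fadd (fmul h f) (fmul h g)"
  by (simp add: fmul_def fadd_def fun_eq_iff algebra_simps sum.distrib)
lemma fmul_smultL: "fmul (fsmult c f) h = fsmult c (fmul f h)"
  by (simp add: fmul_def fsmult_def fun_eq_iff algebra_simps sum_distrib_left)
lemma fmul_smultR: "fmul h (fsmult c f) = fsmult c (fmul h f)"
  by (simp add: fmul_def fsmult_def fun_eq_iff algebra_simps sum_distrib_left)



lemma fmul_diffL: "fmul (fdiff f g) h = fdiff (fmul f h) (fmul g h)"
  by (simp add: fmul_def fdiff_def fun_eq_iff algebra_simps sum_subtractf)
lemma fmul_diffR: "fmul h (fdiff f g) = fdiff (fmul h f) (fmul h g)"
  by (simp add: fmul_def fdiff_def fun_eq_iff algebra_simps sum_subtractf)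

lemma rels_fa: "r \<in> rels q \<Longrightarrow> r \<in> fa_set"
  unfolding rels_def
  by (auto intro!: fdiff_fa fadd_fa fsmult_fa fmul_fa Yf_fa)

lemma ideal_fa: "f \<in> ideal q \<Longrightarrow> f \<in> fa_set"
  by (induction rule: ideal.induct) (auto intro: rels_fa fadd_fa fsmult_fa fmul_fa)

lemma ideal_diff: "f \<in> ideal q \<Longrightarrow> g \<in> ideal q \<Longrightarrow> fdiff f g \<in> ideal q"
  by (simp add: fdiff_eq ideal.add ideal.smult)

lemma ideal_mulL: "f \<in> ideal q \<Longrightarrow> a \<in> fa_set \<Longrightarrow> fmul a f \<in> ideal q"
  using ideal.mult[of f q a "mono []"] by (simp add: fmul_one_right mono_fa)

lemma ideal_mulR: "f \<in> ideal q \<Longrightarrow> b \<in> fa_set \<Longrightarrow> fmul f b \<in> ideal q"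
  using ideal.mult[of f q "mono []" b] by (simp add: fmul_one_left mono_fa)

lemma ideal_sum: "finite A \<Longrightarrow> (\<And>d. d \<in> A \<Longrightarrow> F d \<in> ideal q) \<Longrightarrow> (\<lambda>w. \<Sum>d\<in>A. F d w) \<in> ideal q"
proof (induction A rule: finite_induct)
  case empty
  then show ?case using ideal.zero[of q] by (simp add: fzero_def)
next
  case (insert x A)
  have "(\<lambda>w. \<Sum>d\<in>insert x A. F d w) = fadd (F x) (\<lambda>w. \<Sum>d\<in>A. F d w)"
    using insert by (simp add: fadd_def)
  then show ?case using insert by (simp add: ideal.add)
qed

lemma fdiff_self: "fdiff f f = fzero" by (simp add: fdiff_def fzero_def fun_eq_iff)

lemma eqv_sym: "fdiff f g \<in> ideal q \<Longrightarrow> fdiff g f \<in> ideal q"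
proof -
  assume "fdiff f g \<in> ideal q"
  hence "fsmult (-1) (fdiff f g) \<in> ideal q" by (rule ideal.smult)
  moreover have "fsmult (-1) (fdiff f g) = fdiff g f" by (simp add: fsmult_def fdiff_def fun_eq_iff)
  ultimately show ?thesis by simp
qed

lemma eqv_trans: "fdiff f g \<in> ideal q \<Longrightarrow> fdiff g h \<in> ideal q \<Longrightarrow> fdiff f h \<in> ideal q"
proof -
  assume "fdiff f g \<in> ideal q" "fdiff g h \<in> ideal q"
  hence "fadd (fdiff f g) (fdiff g h) \<in> ideal q" by (rule ideal.add)
  moreover have "fadd (fdiff f g) (fdiff g h) = fdiff f h" by (simp add: fadd_def fdiff_def fun_eq_iff)
  ultimately show ?thesis by simp
qed

lemma cls_self: "f \<in> fa_set \<Longrightarrow> f \<in> cls q f"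
  by (simp add: cls_def fdiff_self ideal.zero)

lemma cls_eq: "f \<in> fa_set \<Longrightarrow> g \<in> fa_set \<Longrightarrow> cls q f = cls q g \<longleftrightarrow> fdiff f g \<in> ideal q"
proof
  assume f: "f \<in> fa_set" and g: "g \<in> fa_set"
  { assume "cls q f = cls q g"
    hence "g \<in> cls q f" using cls_self[OF g] by simp
    thus "fdiff f g \<in> ideal q" by (simp add: cls_def) }
  { assume h: "fdiff f g \<in> ideal q"
    show "cls q f = cls q g"
      unfolding cls_def using h eqv_sym eqv_trans by blast }
qed

lemma rep_cls: "f \<in> fa_set \<Longrightarrow> rep (cls q f) \<in> fa_set \<and> fdiff f (rep (cls q f)) \<in> ideal q"
proof -
  assume f: "f \<in> fa_set"
  have "rep (cls q f) \<in> cls q f" unfolding rep_def by (rule someI[of _ f]) (rule cls_self[OF f])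
  thus ?thesis by (simp add: cls_def)
qed

lemma radd_cls: "f \<in> fa_set \<Longrightarrow> g \<in> fa_set \<Longrightarrow> radd q (cls q f) (cls q g) = cls q (fadd f g)"
proof -
  assume f: "f \<in> fa_set" and g: "g \<in> fa_set"
  define r1 where "r1 = rep (cls q f)"
  define r2 where "r2 = rep (cls q g)"
  have r1: "r1 \<in> fa_set" "fdiff f r1 \<in> ideal q" using rep_cls[OF f] r1_def by auto
  have r2: "r2 \<in> fa_set" "fdiff g r2 \<in> ideal q" using rep_cls[OF g] r2_def by auto
  have "fdiff (fadd f g) (fadd r1 r2) = fadd (fdiff f r1) (fdiff g r2)"
    by (simp add: fadd_def fdiff_def fun_eq_iff)
  hence "fdiff (fadd f g) (fadd r1 r2) \<in> ideal q" using r1 r2 by (simp add: ideal.add)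
  hence "fdiff (fadd r1 r2) (fadd f g) \<in> ideal q" by (rule eqv_sym)
  thus ?thesis unfolding radd_def r1_def[symmetric] r2_def[symmetric]
    using cls_eq r1 r2 f g fadd_fa by blast
qed

lemma rsmult_cls: "f \<in> fa_set \<Longrightarrow> rsmult q c (cls q f) = cls q (fsmult c f)"
proof -
  assume f: "f \<in> fa_set"
  define r1 where "r1 = rep (cls q f)"
  have r1: "r1 \<in> fa_set" "fdiff f r1 \<in> ideal q" using rep_cls[OF f] r1_def by auto
  have "fdiff (fsmult c r1) (fsmult c f) = fsmult (-c) (fdiff f r1)"
    by (simp add: fsmult_def fdiff_def fun_eq_iff algebra_simps)
  hence "fdiff (fsmult c r1) (fsmult c f) \<in> ideal q" using r1 by (simp add: ideal.smult)
  thus ?thesis unfolding rsmult_def r1_def[symmetric]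
    using cls_eq r1 f fsmult_fa by blast
qed

lemma rsub_cls: "f \<in> fa_set \<Longrightarrow> g \<in> fa_set \<Longrightarrow> rsub q (cls q f) (cls q g) = cls q (fdiff f g)"
proof -
  assume f: "f \<in> fa_set" and g: "g \<in> fa_set"
  define r1 where "r1 = rep (cls q f)"
  define r2 where "r2 = rep (cls q g)"
  have r1: "r1 \<in> fa_set" "fdiff f r1 \<in> ideal q" using rep_cls[OF f] r1_def by auto
  have r2: "r2 \<in> fa_set" "fdiff g r2 \<in> ideal q" using rep_cls[OF g] r2_def by auto
  have "fdiff (fdiff r1 r2) (fdiff f g) = fdiff (fdiff g r2) (fdiff f r1)"
    by (simp add: fdiff_def fun_eq_iff)
  hence "fdiff (fdiff r1 r2) (fdiff f g) \<in> ideal q" using r1 r2 by (simp add: ideal_diff)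
  thus ?thesis unfolding rsub_def r1_def[symmetric] r2_def[symmetric]
    using cls_eq r1 r2 f g fdiff_fa by blast
qed

lemma rmul_cls: "f \<in> fa_set \<Longrightarrow> g \<in> fa_set \<Longrightarrow> rmul q (cls q f) (cls q g) = cls q (fmul f g)"
proof -
  assume f: "f \<in> fa_set" and g: "g \<in> fa_set"
  define r1 where "r1 = rep (cls q f)"
  define r2 where "r2 = rep (cls q g)"
  have r1: "r1 \<in> fa_set" "fdiff f r1 \<in> ideal q" using rep_cls[OF f] r1_def by auto
  have r2: "r2 \<in> fa_set" "fdiff g r2 \<in> ideal q" using rep_cls[OF g] r2_def by auto
  have "fdiff (fmul f g) (fmul r1 r2) = fadd (fmul (fdiff f r1) g) (fmul r1 (fdiff g r2))"
    by (simp add: fmul_diffL fmul_diffR) (simp add: fadd_def fdiff_def fun_eq_iff)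
  moreover have "fmul (fdiff f r1) g \<in> ideal q" using r1 g by (simp add: ideal_mulR)
  moreover have "fmul r1 (fdiff g r2) \<in> ideal q" using r1 r2 by (simp add: ideal_mulL)
  ultimately have "fdiff (fmul f g) (fmul r1 r2) \<in> ideal q" by (simp add: ideal.add)
  hence "fdiff (fmul r1 r2) (fmul f g) \<in> ideal q" by (rule eqv_sym)
  thus ?thesis unfolding rmul_def r1_def[symmetric] r2_def[symmetric]
    using cls_eq r1 r2 f g fmul_fa by blast
qed

lemma Rcar_cls: "f \<in> fa_set \<Longrightarrow> cls q f \<in> Rcar q" by (simp add: Rcar_def)

lemma Rcar_E: "X \<in> Rcar q \<Longrightarrow> (\<And>f. f \<in> fa_set \<Longrightarrow> X = cls q f \<Longrightarrow> P) \<Longrightarrow> P"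
  by (auto simp: Rcar_def)



definition hi :: "nat \<Rightarrow> 'k::field fa \<Rightarrow> bool" where
  "hi d f \<longleftrightarrow> (\<forall>w. f w \<noteq> 0 \<longrightarrow> d \<le> length w)"

definition hom :: "nat \<Rightarrow> 'k::field fa \<Rightarrow> bool" where
  "hom d f \<longleftrightarrow> (\<forall>w. f w \<noteq> 0 \<longrightarrow> length w = d)"

lemma hi_fzero[simp]: "hi d fzero" by (simp add: hi_def fzero_def)
lemma hi_fadd: "hi d f \<Longrightarrow> hi d g \<Longrightarrow> hi d (fadd f g)"
  unfolding hi_def fadd_def by (metis add.right_neutral)
lemma hi_fsmult: "hi d f \<Longrightarrow> hi d (fsmult c f)"
  unfolding hi_def fsmult_def by auto
lemma hi_mono: "hi d f \<Longrightarrow> d' \<le> d \<Longrightarrow> hi d' f"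
  unfolding hi_def by force
lemma hi_fmul: "hi a f \<Longrightarrow> hi b g \<Longrightarrow> hi (a + b) (fmul f g)"
  unfolding hi_def
proof (intro allI impI)
  fix w assume hf: "\<forall>w. f w \<noteq> 0 \<longrightarrow> a \<le> length w" and hg: "\<forall>w. g w \<noteq> 0 \<longrightarrow> b \<le> length w"
    and "fmul f g w \<noteq> 0"
  then obtain i where "i \<le> length w" "f (take i w) * g (drop i w) \<noteq> 0"
    unfolding fmul_def by (auto elim: sum.not_neutral_contains_not_neutral)
  hence "a \<le> length (take i w)" "b \<le> length (drop i w)" using hf hg by auto
  thus "a + b \<le> length w" using \<open>i \<le> length w\<close> by simp
qed
lemma hi_monoword: "hi (length w) (mono w)" by (simp add: hi_def mono_def)
lemma hom_monoword: "hom (length w) (mono w)" by (simp add: hom_def mono_def)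

lemma Rge_cls: "e \<in> fa_set \<Longrightarrow> hi d e \<Longrightarrow> cls q e \<in> Rge q d"
  by (auto simp: Rge_def hi_def)

lemma decomp:
  assumes X: "X \<in> Rcar q" and a: "a \<in> fa_set" and r: "rsub q X (cls q a) \<in> Rge q d"
  shows "\<exists>e. e \<in> fa_set \<and> hi d e \<and> X = cls q (fadd a e)"
proof -
  obtain s where s: "s \<in> fa_set" "X = cls q s" using X by (auto simp: Rcar_def)
  obtain e where e: "e \<in> fa_set" "hi d e" "rsub q X (cls q a) = cls q e"
    using r by (auto simp: Rge_def hi_def)
  have "cls q (fdiff s a) = cls q e" using e s rsub_cls[OF s(1) a] by simp
  hence "fdiff (fdiff s a) e \<in> ideal q" using cls_eq e(1) fdiff_fa[OF s(1) a] by blast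
  moreover have "fdiff (fdiff s a) e = fdiff s (fadd a e)" by (simp add: fdiff_def fadd_def fun_eq_iff)
  ultimately have "cls q s = cls q (fadd a e)" using cls_eq[OF s(1) fadd_fa[OF a e(1)]] by simp
  thus ?thesis using e s by blast
qed

lemma decomp_conv:
  assumes a: "a \<in> fa_set" and e: "e \<in> fa_set" "hi d e"
  shows "rsub q (cls q (fadd a e)) (cls q a) \<in> Rge q d"
proof -
  have "rsub q (cls q (fadd a e)) (cls q a) = cls q (fdiff (fadd a e) a)"
    by (rule rsub_cls) (use a e fadd_fa in auto)
  also have "fdiff (fadd a e) a = e" by (simp add: fdiff_def fadd_def fun_eq_iff)
  finally show ?thesis using Rge_cls e by simp
qed

lemma fadd_fzero: "fadd f fzero = f" by (simp add: fadd_def fzero_def fun_eq_iff)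

context
  fixes q :: "'k::field" and \<sigma> :: "'k fa set \<Rightarrow> 'k fa set"
  assumes aut: "alg_aut q \<sigma>"
    and hY: "\<forall>i\<in>{1..3}. \<forall>a\<in>{1..3}. rsub q (\<sigma> (Y q i a)) (Y q i a) \<in> Rge q 2"
begin

lemma sig_Rcar: "X \<in> Rcar q \<Longrightarrow> \<sigma> X \<in> Rcar q"
  using aut unfolding alg_aut_def by (meson bij_betw_apply)

lemma sig_add: "X \<in> Rcar q \<Longrightarrow> Z \<in> Rcar q \<Longrightarrow> \<sigma> (radd q X Z) = radd q (\<sigma> X) (\<sigma> Z)"
  using aut unfolding alg_aut_def by blast
lemma sig_mul: "X \<in> Rcar q \<Longrightarrow> Z \<in> Rcar q \<Longrightarrow> \<sigma> (rmul q X Z) = rmul q (\<sigma> X) (\<sigma> Z)"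
  using aut unfolding alg_aut_def by blast
lemma sig_smult: "X \<in> Rcar q \<Longrightarrow> \<sigma> (rsmult q c X) = rsmult q c (\<sigma> X)"
  using aut unfolding alg_aut_def by blast
lemma sig_one: "\<sigma> (rone q) = rone q"
  using aut unfolding alg_aut_def by blast

lemma sig_zero: "\<sigma> (cls q fzero) = cls q fzero"
proof -
  have z: "rsmult q 0 Z = cls q fzero" for Z by (simp add: rsmult_def fsmult_def fzero_def)
  have "\<sigma> (cls q fzero) = \<sigma> (rsmult q 0 (cls q fzero))" by (simp add: z)
  also have "\<dots> = rsmult q 0 (\<sigma> (cls q fzero))" by (rule sig_smult) (simp add: Rcar_cls)
  finally show ?thesis by (simp add: z)
qed

lemma sig_Y: "y \<in> gens \<Longrightarrow> \<exists>h. h \<in> fa_set \<and> hi 2 h \<and> \<sigma> (cls q (mono [y])) = cls q (fadd (mono [y]) h)"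
proof -
  assume y: "y \<in> gens"
  obtain i a where ia: "y = (i, a)" "i \<in> {1..3}" "a \<in> {1..3}" using y by (auto simp: gens_def)
  have Ydef: "cls q (mono [y]) = Y q i a" by (simp add: Y_def Yf_def ia)
  have m: "(mono [y] :: 'k fa) \<in> fa_set" using y by (simp add: mono_fa)
  show ?thesis
  proof (rule decomp)
    have "Y q i a \<in> Rcar q" using Ydef Rcar_cls[OF m] by metis
    thus "\<sigma> (cls q (mono [y])) \<in> Rcar q" using Ydef sig_Rcar by simp
    show "rsub q (\<sigma> (cls q (mono [y]))) (cls q (mono [y])) \<in> Rge q 2" using hY ia Ydef by simp
  qed (rule m)
qed

lemma sig_monoword: "set w \<subseteq> gens \<Longrightarrow> \<exists>e. e \<in> fa_set \<and> hi (length w + 1) e \<and> \<sigma> (cls q (mono w)) = cls q (fadd (mono w) e)"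
proof (induction w rule: rev_induct)
  case Nil
  show ?case using sig_one by (intro exI[of _ fzero]) (simp add: rone_def fadd_fzero)
next
  case (snoc y w)
  have wg: "set w \<subseteq> gens" and y: "y \<in> gens" using snoc.prems by auto
  obtain e1 where e1: "e1 \<in> fa_set" "hi (length w + 1) e1" "\<sigma> (cls q (mono w)) = cls q (fadd (mono w) e1)"
    using snoc.IH wg by blast
  obtain h where h: "h \<in> fa_set" "hi 2 h" "\<sigma> (cls q (mono [y])) = cls q (fadd (mono [y]) h)"
    using sig_Y y by blast
  have mw: "(mono w :: 'k fa) \<in> fa_set" using wg by (simp add: mono_fa)
  have my: "(mono [y] :: 'k fa) \<in> fa_set" using y by (simp add: mono_fa)
  define e where "e = fadd (fadd (fmul (mono w) h) (fmul e1 (mono [y]))) (fmul e1 h)"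
  have "cls q (mono (w @ [y])) = rmul q (cls q (mono w)) (cls q (mono [y]))"
    by (simp add: rmul_cls mw my fmul_mono)
  hence "\<sigma> (cls q (mono (w @ [y]))) = rmul q (\<sigma> (cls q (mono w))) (\<sigma> (cls q (mono [y])))"
    using sig_mul[OF Rcar_cls[OF mw] Rcar_cls[OF my]] by simp
  also have "\<dots> = cls q (fmul (fadd (mono w) e1) (fadd (mono [y]) h))"
    using e1 h by (simp add: rmul_cls fadd_fa mw my)
  also have "fmul (fadd (mono w) e1) (fadd (mono [y]) h) = fadd (mono (w @ [y])) e"
    unfolding e_def fmul_distL fmul_distR fmul_mono[symmetric]
    by (simp add: fadd_def fun_eq_iff algebra_simps)
  finally have "\<sigma> (cls q (mono (w @ [y]))) = cls q (fadd (mono (w @ [y])) e)" .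
  moreover have "e \<in> fa_set" unfolding e_def using e1 h mw my by (intro fadd_fa fmul_fa) auto
  moreover have "hi (length (w @ [y]) + 1) e"
  proof -
    have 1: "hi (length w + 2) (fmul (mono w) h)" using hi_fmul[OF hi_monoword h(2)] .
    have 2: "hi (length w + 2) (fmul e1 (mono [y]))" using hi_fmul[OF e1(2) hi_monoword[of "[y]"]] by simp
    have 3: "hi (length w + 2) (fmul e1 h)" using hi_mono[OF hi_fmul[OF e1(2) h(2)]] by simp
    show ?thesis unfolding e_def using 1 2 3 by (simp add: hi_fadd)
  qed
  ultimately show ?case by blast
qed

lemma sig_lin_aux: "finite S \<Longrightarrow> \<forall>f. supp f = S \<longrightarrow> f \<in> fa_set \<longrightarrow> hom n f \<longrightarrow>
   (\<exists>e. e \<in> fa_set \<and> hi (n + 1) e \<and> \<sigma> (cls q f) = cls q (fadd f e))"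
proof (induction S rule: finite_induct)
  case empty
  show ?case
  proof (intro allI impI)
    fix f :: "'k fa" assume "supp f = {}"
    hence "f = fzero" by (auto simp: fzero_def fun_eq_iff)
    thus "\<exists>e. e \<in> fa_set \<and> hi (n + 1) e \<and> \<sigma> (cls q f) = cls q (fadd f e)"
      using sig_zero by (intro exI[of _ fzero]) (simp add: fadd_fzero)
  qed
next
  case (insert w S)
  show ?case
  proof (intro allI impI)
    fix f :: "'k fa" assume sf: "supp f = insert w S" and f: "f \<in> fa_set" and hf: "hom n f"
    define f' where "f' = f(w := 0)"
    have sf': "supp f' = S" using sf insert.hyps by (auto simp: f'_def)
    have fw: "f w \<noteq> 0" using sf by auto
    have f'fa: "f' \<in> fa_set"
      by (rule fa_setI) (use sf' insert.hyps f fa_set_gens in \<open>auto simp: f'_def split: if_splits\<close>)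
    have hf': "hom n f'" using hf by (simp add: hom_def f'_def)
    obtain e1 where e1: "e1 \<in> fa_set" "hi (n + 1) e1" "\<sigma> (cls q f') = cls q (fadd f' e1)"
      using insert.IH sf' f'fa hf' by blast
    have wg: "set w \<subseteq> gens" using f fw fa_set_gens by blast
    have wl: "length w = n" using hf fw by (simp add: hom_def)
    obtain e2 where e2: "e2 \<in> fa_set" "hi (n + 1) e2" "\<sigma> (cls q (mono w)) = cls q (fadd (mono w) e2)"
      using sig_monoword[OF wg] wl by blast
    have mw: "(mono w :: 'k fa) \<in> fa_set" using wg by (simp add: mono_fa)
    have feq: "f = fadd f' (fsmult (f w) (mono w))"
      by (simp add: fadd_def fsmult_def mono_def f'_def fun_eq_iff)
    have "cls q f = radd q (cls q f') (rsmult q (f w) (cls q (mono w)))"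
      using feq by (simp add: rsmult_cls radd_cls mw f'fa fsmult_fa)
    also have "\<dots> = radd q (cls q f') (cls q (fsmult (f w) (mono w)))" using rsmult_cls[OF mw] by simp
    finally have "\<sigma> (cls q f) = \<sigma> (radd q (cls q f') (cls q (fsmult (f w) (mono w))))" by simp
    also have "\<dots> = radd q (\<sigma> (cls q f')) (\<sigma> (cls q (fsmult (f w) (mono w))))"
      by (rule sig_add[OF Rcar_cls[OF f'fa] Rcar_cls[OF fsmult_fa[OF mw]]])
    also have "\<sigma> (cls q (fsmult (f w) (mono w))) = \<sigma> (rsmult q (f w) (cls q (mono w)))"
      using rsmult_cls[OF mw] by simp
    also have "\<dots> = rsmult q (f w) (\<sigma> (cls q (mono w)))" by (rule sig_smult[OF Rcar_cls[OF mw]])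
    also have "radd q (\<sigma> (cls q f')) (rsmult q (f w) (\<sigma> (cls q (mono w)))) = cls q (fadd (fadd f' e1) (fsmult (f w) (fadd (mono w) e2)))"
      using e1 e2 mw f'fa by (simp add: rsmult_cls radd_cls fadd_fa fsmult_fa)
    also have "fadd (fadd f' e1) (fsmult (f w) (fadd (mono w) e2)) = fadd f (fadd e1 (fsmult (f w) e2))"
      by (subst (2) feq) (simp add: fadd_def fsmult_def fun_eq_iff algebra_simps)
    finally show "\<exists>e. e \<in> fa_set \<and> hi (n + 1) e \<and> \<sigma> (cls q f) = cls q (fadd f e)"
      using e1 e2 by (intro exI[of _ "fadd e1 (fsmult (f w) e2)"]) (simp add: fadd_fa fsmult_fa hi_fadd hi_fsmult)
  qed
qed

lemma sig_lin: "f \<in> fa_set \<Longrightarrow> hom n f \<Longrightarrow> \<exists>e. e \<in> fa_set \<and> hi (n + 1) e \<and> \<sigma> (cls q f) = cls q (fadd f e)"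
  using sig_lin_aux[OF fa_set_fin] by blast

end


lemma hpart_fa: "f \<in> fa_set \<Longrightarrow> hpart d f \<in> fa_set"
proof (rule fa_setI)
  assume f: "f \<in> fa_set"
  have "supp (hpart d f) \<subseteq> supp f" by (auto simp: hpart_def)
  thus "finite (supp (hpart d f))" using f fa_set_fin finite_subset by blast
  show "hpart d f w \<noteq> 0 \<Longrightarrow> set w \<subseteq> gens" for w using f fa_set_gens[of f w]
    by (auto simp: hpart_def split: if_splits)
qed

lemma hpart_fmul: "hpart d (fmul f g) = (\<lambda>w. \<Sum>i\<le>d. fmul (hpart i f) (hpart (d - i) g) w)"
proof
  fix w
  show "hpart d (fmul f g) w = (\<Sum>i\<le>d. fmul (hpart i f) (hpart (d - i) g) w)"
  proof (cases "length w = d")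
    case False
    have "fmul (hpart i f) (hpart (d - i) g) w = 0" if "i \<le> d" for i
      unfolding fmul_def hpart_def using False that
      by (intro sum.neutral) auto
    thus ?thesis using False by (simp add: hpart_def)
  next
    case True
    have "(\<Sum>i\<le>d. fmul (hpart i f) (hpart (d - i) g) w)
        = (\<Sum>i\<le>d. \<Sum>j\<le>length w. if j = i then f (take j w) * g (drop j w) else 0)"
      unfolding fmul_def hpart_def using True
      by (intro sum.cong refl) (auto simp: min_def)
    also have "\<dots> = (\<Sum>j\<le>length w. \<Sum>i\<le>d. if j = i then f (take j w) * g (drop j w) else 0)"
      by (rule sum.swap)
    also have "\<dots> = (\<Sum>j\<le>length w. f (take j w) * g (drop j w))"
      using True by (intro sum.cong refl) auto
    finally show ?thesis using True by (simp add: hpart_def fmul_def)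
  qed
qed

lemma fmul_sumL: "fmul (\<lambda>w. \<Sum>j\<in>A. F j w) g = (\<lambda>w. \<Sum>j\<in>A. fmul (F j) g w)"
  by (simp add: fmul_def fun_eq_iff sum_distrib_right sum.swap[of _ A])

lemma hom_fmul: "hom a f \<Longrightarrow> hom b g \<Longrightarrow> hom (a + b) (fmul f g)"
  unfolding hom_def
proof (intro allI impI)
  fix w assume hf: "\<forall>w. f w \<noteq> 0 \<longrightarrow> length w = a" and hg: "\<forall>w. g w \<noteq> 0 \<longrightarrow> length w = b"
    and "fmul f g w \<noteq> 0"
  then obtain i where "i \<le> length w" "f (take i w) * g (drop i w) \<noteq> 0"
    unfolding fmul_def by (auto elim: sum.not_neutral_contains_not_neutral)
  hence "length (take i w) = a" "length (drop i w) = b" using hf hg by auto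
  thus "length w = a + b" using \<open>i \<le> length w\<close> by simp
qed
lemma hom_fadd: "hom d f \<Longrightarrow> hom d g \<Longrightarrow> hom d (fadd f g)"
  unfolding hom_def fadd_def by (metis add.right_neutral)
lemma hom_fsmult: "hom d f \<Longrightarrow> hom d (fsmult c f)"
  unfolding hom_def fsmult_def by auto
lemma hom_fdiff: "hom d f \<Longrightarrow> hom d g \<Longrightarrow> hom d (fdiff f g)"
  unfolding fdiff_eq by (intro hom_fadd hom_fsmult)
lemma hom_Yf: "hom 1 (Yf i a)" by (simp add: Yf_def hom_def mono_def)

lemma rels_hom: "r \<in> rels q \<Longrightarrow> hom 2 r"
proof -
  have m: "hom 2 (fmul (Yf i a) (Yf j b))" for i a j b
  proof -
    have "hom (1+1) (fmul (Yf i a) (Yf j b))" by (rule hom_fmul[OF hom_Yf hom_Yf])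
    thus ?thesis by (simp only: one_add_one)
  qed
  assume "r \<in> rels q"
  thus ?thesis unfolding rels_def
    by (auto intro!: hom_fdiff hom_fadd hom_fsmult m)
qed

lemma hpart_hom: "hom n f \<Longrightarrow> hpart d f = (if d = n then f else fzero)"
  by (auto simp: hom_def hpart_def fzero_def fun_eq_iff)

lemma hpart_ideal: "f \<in> ideal q \<Longrightarrow> \<forall>d. hpart d f \<in> ideal q"
proof (induction rule: ideal.induct)
  case (gen r)
  thus ?case using hpart_hom[OF rels_hom[OF gen]] by (simp add: ideal.gen ideal.zero)
next
  case zero
  show ?case using ideal.zero[of q] by (simp add: hpart_def fzero_def)
next
  case (add f g)
  have "hpart d (fadd f g) = fadd (hpart d f) (hpart d g)" for d by (simp add: hpart_def fadd_def fun_eq_iff)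
  thus ?case using add by (simp add: ideal.add)
next
  case (smult f c)
  have "hpart d (fsmult c f) = fsmult c (hpart d f)" for d by (simp add: hpart_def fsmult_def fun_eq_iff)
  thus ?case using smult by (simp add: ideal.smult)
next
  case (mult f a b)
  show ?case
  proof
    fix d
    have "hpart d (fmul (fmul a f) b) = (\<lambda>w. \<Sum>i\<le>d. \<Sum>j\<le>i. fmul (fmul (hpart j a) (hpart (i - j) f)) (hpart (d - i) b) w)"
      by (simp add: hpart_fmul fmul_sumL)
    also have "\<dots> \<in> ideal q"
    proof (rule ideal_sum)
      fix i assume "i \<in> {..d}"
      show "(\<lambda>w. \<Sum>j\<le>i. fmul (fmul (hpart j a) (hpart (i - j) f)) (hpart (d - i) b) w) \<in> ideal q"
        by (rule ideal_sum) (use mult in \<open>auto intro!: ideal.mult hpart_fa\<close>)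
    qed simp
    finally show "hpart d (fmul (fmul a f) b) \<in> ideal q" .
  qed
qed

lemma rcomp_cls: "f \<in> fa_set \<Longrightarrow> rcomp q d (cls q f) = cls q (hpart d f)"
proof -
  assume f: "f \<in> fa_set"
  define r where "r = rep (cls q f)"
  have r: "r \<in> fa_set" "fdiff f r \<in> ideal q" using rep_cls[OF f] r_def by auto
  have "fdiff (hpart d r) (hpart d f) = hpart d (fsmult (-1) (fdiff f r))"
    by (simp add: hpart_def fsmult_def fdiff_def fun_eq_iff)
  hence "fdiff (hpart d r) (hpart d f) \<in> ideal q" using r hpart_ideal ideal.smult by metis
  thus ?thesis unfolding rcomp_def r_def[symmetric]
    using cls_eq hpart_fa r f by blast
qed

lemma fa_bound: "f \<in> fa_set \<Longrightarrow> \<exists>N. \<forall>w. f w \<noteq> 0 \<longrightarrow> length w \<le> N"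
proof -
  assume "f \<in> fa_set"
  hence "finite (length ` supp f)" using fa_set_fin by blast
  thus ?thesis by (metis (mono_tags, lifting) finite_nat_set_iff_bounded_le image_eqI mem_Collect_eq)
qed

lemma hpart_decomp: "\<forall>w. f w \<noteq> 0 \<longrightarrow> length w \<le> N \<Longrightarrow> f = (\<lambda>w. \<Sum>d\<le>N. hpart d f w)"
proof
  fix w assume b: "\<forall>w. f w \<noteq> 0 \<longrightarrow> length w \<le> N"
  show "f w = (\<Sum>d\<le>N. hpart d f w)"
  proof (cases "f w = 0")
    case True thus ?thesis by (simp add: hpart_def)
  next
    case False
    hence "length w \<le> N" using b by auto
    thus ?thesis by (simp add: hpart_def)
  qed
qed



definition chi :: "(nat \<times> nat) set \<Rightarrow> (nat \<times> nat) list \<Rightarrow> 'k::field" where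
  "chi D w = (if set w \<subseteq> D then 1 else 0)"

definition ev :: "(nat \<times> nat) set \<Rightarrow> 'k::field fa \<Rightarrow> 'k" where
  "ev D f = (\<Sum>w\<in>supp f. f w * chi D w)"

lemma ev_sup: "finite S \<Longrightarrow> supp f \<subseteq> S \<Longrightarrow> ev D f = (\<Sum>w\<in>S. f w * chi D w)"
  unfolding ev_def by (rule sum.mono_neutral_left) auto

lemma fin_fadd: "finite (supp f) \<Longrightarrow> finite (supp g) \<Longrightarrow> finite (supp (fadd f g))"
  by (rule finite_subset[of _ "supp f \<union> supp g"]) (auto simp: fadd_def)
lemma fin_fsmult: "finite (supp f) \<Longrightarrow> finite (supp (fsmult c f))"
  by (rule finite_subset[of _ "supp f"]) (auto simp: fsmult_def)
lemma fin_mono: "finite (supp (mono w :: 'k::field fa))"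
  by (rule finite_subset[of _ "{w}"]) (auto simp: mono_def)

lemma ev_fadd: "finite (supp f) \<Longrightarrow> finite (supp g) \<Longrightarrow> ev D (fadd f g) = ev D f + ev D g"
proof -
  assume f: "finite (supp f)" and g: "finite (supp g)"
  let ?S = "supp f \<union> supp g"
  have "ev D (fadd f g) = (\<Sum>w\<in>?S. fadd f g w * chi D w)" by (rule ev_sup) (use f g in \<open>auto simp: fadd_def\<close>)
  also have "\<dots> = (\<Sum>w\<in>?S. f w * chi D w) + (\<Sum>w\<in>?S. g w * chi D w)"
    by (simp add: fadd_def algebra_simps sum.distrib)
  also have "\<dots> = ev D f + ev D g" using ev_sup[of ?S f D] ev_sup[of ?S g D] f g by auto
  finally show ?thesis .
qed

lemma ev_fsmult: "finite (supp f) \<Longrightarrow> ev D (fsmult c f) = c * ev D f"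
proof -
  assume f: "finite (supp f)"
  have "ev D (fsmult c f) = (\<Sum>w\<in>supp f. fsmult c f w * chi D w)" by (rule ev_sup) (use f in \<open>auto simp: fsmult_def\<close>)
  also have "\<dots> = c * ev D f" by (simp add: ev_def fsmult_def sum_distrib_left algebra_simps)
  finally show ?thesis .
qed

lemma ev_fdiff: "finite (supp f) \<Longrightarrow> finite (supp g) \<Longrightarrow> ev D (fdiff f g) = ev D f - ev D g"
  unfolding fdiff_eq by (simp add: ev_fadd ev_fsmult fin_fsmult)

lemma fin_fdiff: "finite (supp f) \<Longrightarrow> finite (supp g) \<Longrightarrow> finite (supp (fdiff f g))"
  unfolding fdiff_eq by (intro fin_fadd fin_fsmult)

lemma ev_fzero: "ev D fzero = 0" by (simp add: ev_def fzero_def)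

lemma ev_mono: "ev D (mono w) = chi D w"
proof -
  have "ev D (mono w) = (\<Sum>u\<in>{w}. mono w u * chi D u)" by (rule ev_sup) (auto simp: mono_def)
  thus ?thesis by (simp add: mono_def)
qed

lemma chi_append: "chi D (u @ v) = chi D u * chi D v" by (simp add: chi_def)

lemma fmul_split:
  assumes P: "supp f \<times> supp g \<subseteq> P"
  shows "fmul f g w = (\<Sum>p\<in>{p\<in>P. fst p @ snd p = w}. f (fst p) * g (snd p))"
proof -
  let ?phi = "\<lambda>i. (take i w, drop i w)"
  have inj: "inj_on ?phi {..length w}"
    by (rule inj_onI) (metis Pair_inject atMost_iff length_take min.absorb2)
  have img: "?phi ` {..length w} = {p. fst p @ snd p = w}"
  proof
    show "?phi ` {..length w} \<subseteq> {p. fst p @ snd p = w}" by auto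
    show "{p. fst p @ snd p = w} \<subseteq> ?phi ` {..length w}"
    proof
      fix p assume "p \<in> {p. fst p @ snd p = w}"
      hence "fst p @ snd p = w" by simp
      thus "p \<in> ?phi ` {..length w}"
        by (intro image_eqI[of _ _ "length (fst p)"]) auto
    qed
  qed
  have "fmul f g w = (\<Sum>i\<le>length w. (\<lambda>p. f (fst p) * g (snd p)) (?phi i))" by (simp add: fmul_def)
  also have "\<dots> = (\<Sum>p\<in>?phi ` {..length w}. f (fst p) * g (snd p))"
    by (subst sum.reindex[OF inj]) (simp add: o_def)
  also have "\<dots> = (\<Sum>p\<in>{p\<in>P. fst p @ snd p = w}. f (fst p) * g (snd p))"
  proof (rule sum.mono_neutral_right)
    show "finite (?phi ` {..length w})" by simp
    show "{p \<in> P. fst p @ snd p = w} \<subseteq> ?phi ` {..length w}" using img by auto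
    show "\<forall>p\<in>?phi ` {..length w} - {p \<in> P. fst p @ snd p = w}. f (fst p) * g (snd p) = 0"
      using img P by (auto simp: mem_Times_iff)
  qed
  finally show ?thesis .
qed

lemma ev_fmul:
  assumes f: "finite (supp f)" and g: "finite (supp g)"
  shows "ev D (fmul f g) = ev D f * ev D g"
proof -
  let ?P = "supp f \<times> supp g"
  let ?cat = "\<lambda>p. fst p @ snd p"
  have fP: "finite ?P" using f g by simp
  have "ev D (fmul f g) = (\<Sum>w\<in>?cat ` ?P. fmul f g w * chi D w)"
  proof (rule ev_sup)
    show "finite (?cat ` ?P)" using fP by simp
    show "supp (fmul f g) \<subseteq> ?cat ` ?P" using fmul_supp[of f g] by (auto simp: case_prod_beta)
  qed
  also have "\<dots> = (\<Sum>w\<in>?cat ` ?P. \<Sum>p\<in>{p\<in>?P. ?cat p = w}. f (fst p) * g (snd p) * chi D (?cat p))"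
    by (intro sum.cong refl) (simp add: fmul_split[OF subset_refl] sum_distrib_right)
  also have "\<dots> = (\<Sum>p\<in>?P. f (fst p) * g (snd p) * chi D (?cat p))"
    by (rule sum.group) (use fP in auto)
  also have "\<dots> = (\<Sum>p\<in>?P. (f (fst p) * chi D (fst p)) * (g (snd p) * chi D (snd p)))"
    by (intro sum.cong refl) (simp add: chi_append algebra_simps)
  also have "\<dots> = ev D f * ev D g"
    unfolding ev_def sum_product sum.cartesian_product by (simp add: case_prod_beta)
  finally show ?thesis .
qed

lemma ev_ideal:
  assumes R: "\<And>r. r \<in> rels q \<Longrightarrow> ev D r = 0"
  shows "f \<in> ideal q \<Longrightarrow> ev D f = 0"
proof (induction rule: ideal.induct)
  case (gen r) thus ?case by (rule R)
next
  case zero thus ?case by (rule ev_fzero)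
next
  case (add f g)
  have "finite (supp f)" "finite (supp g)" using add ideal_fa fa_set_fin by blast+
  thus ?case using add by (simp add: ev_fadd)
next
  case (smult f c)
  have "finite (supp f)" using smult ideal_fa fa_set_fin by blast+
  thus ?case using smult by (simp add: ev_fsmult)
next
  case (mult f a b)
  have fs: "finite (supp f)" "finite (supp a)" "finite (supp b)" using mult ideal_fa fa_set_fin by auto
  have "finite (supp (fmul a f))" using fmul_fa mult ideal_fa fa_set_fin by blast
  thus ?case using fs mult by (simp add: ev_fmul)
qed

definition good :: "(nat \<times> nat) set \<Rightarrow> bool" where
  "good D \<longleftrightarrow> (\<forall>x\<in>D. \<forall>y\<in>D. (fst x = fst y \<or> snd x = snd y \<longrightarrow> x = y) \<and> (fst x < fst y \<longrightarrow> snd x < snd y))"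

lemma ev_YY: "ev D (fmul (Yf i a) (Yf j b)) = (if (i,a) \<in> D \<and> (j,b) \<in> D then 1 else 0)"
  by (simp add: Yf_def fmul_mono ev_mono chi_def)

lemma fin_YY: "finite (supp (fmul (Yf i a) (Yf j b) :: 'k::field fa))"
  by (simp add: Yf_def fmul_mono fin_mono)

lemma ev_rels: "good D \<Longrightarrow> r \<in> rels q \<Longrightarrow> ev D r = 0"
proof -
  assume gd: "good D" and r: "r \<in> rels q"
  have nr: "a = b" if "(i,a) \<in> D" "(i,b) \<in> D" for i a b using gd that unfolding good_def by fastforce
  have nc: "i = j" if "(i,a) \<in> D" "(j,a) \<in> D" for i j a using gd that unfolding good_def by fastforce
  have nd: "\<not> (i < j \<and> a < b)" if "(i,b) \<in> D" "(j,a) \<in> D" for i j a b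
    using gd that unfolding good_def by fastforce
  from r show ?thesis unfolding rels_def
    apply (elim UnE CollectE exE conjE)
    apply (simp_all add: ev_fdiff ev_fadd ev_fsmult fin_YY fin_fsmult fin_fadd fin_fdiff ev_YY)
    apply (auto dest: nr nc nd)
    done
qed



lemma ev_sum: fixes F :: "'p \<Rightarrow> 'k::field fa" shows "finite A \<Longrightarrow> (\<And>p. p \<in> A \<Longrightarrow> finite (supp (F p))) \<Longrightarrow>
  finite (supp (\<lambda>u. \<Sum>p\<in>A. F p u)) \<and> ev D (\<lambda>u. \<Sum>p\<in>A. F p u) = (\<Sum>p\<in>A. ev D (F p))"
proof (induction A rule: finite_induct)
  case empty
  have "(\<lambda>u. 0) = (fzero :: 'k fa)" by (simp add: fzero_def)
  then show ?case by (simp add: ev_fzero)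
next
  case (insert x A)
  have eq: "(\<lambda>u. \<Sum>p\<in>insert x A. F p u) = fadd (F x) (\<lambda>u. \<Sum>p\<in>A. F p u)"
    using insert by (simp add: fadd_def)
  have fx: "finite (supp (F x))" using insert by simp
  have fA: "finite (supp (\<lambda>u. \<Sum>p\<in>A. F p u))" "ev D (\<lambda>u. \<Sum>p\<in>A. F p u) = (\<Sum>p\<in>A. ev D (F p))"
    using insert by auto
  have "supp (\<lambda>u. \<Sum>p\<in>insert x A. F p u) = supp (fadd (F x) (\<lambda>u. \<Sum>p\<in>A. F p u))"
    by (simp add: fadd_def insert)
  hence f1: "finite (supp (\<lambda>u. \<Sum>p\<in>insert x A. F p u))" using fin_fadd[OF fx fA(1)] by simp
  have "ev D (\<lambda>u. \<Sum>p\<in>insert x A. F p u) = (\<Sum>p\<in>insert x A. ev D (F p))"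
    unfolding eq using fx fA insert(1,2) by (simp add: ev_fadd)
  with f1 show ?case by blast
qed

context
  fixes I L :: "nat set"
  assumes IL: "I \<subseteq> {1..3}" "L \<subseteq> {1..3}" "card I = card L"
begin

definition "iss = sorted_list_of_set I"
definition "ass = sorted_list_of_set L"
definition "tt = card I"
definition "DD = {(iss ! k, ass ! k) | k. k < tt}"
definition "wd p = map (\<lambda>k. (iss ! k, ass ! p k)) [0..<tt]"
definition "cf (q::'k::field) p = (- q) ^ card {(i, j). i < j \<and> j < tt \<and> p j < p i}"

lemma finI: "finite I" and finL: "finite L" using IL finite_subset by blast+

lemma len: "length iss = tt" "length ass = tt"
  using finI finL IL by (auto simp: iss_def ass_def tt_def)

lemma iss_in: "k < tt \<Longrightarrow> iss ! k \<in> {1..3}"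
  using len IL finI by (metis iss_def nth_mem set_sorted_list_of_set subsetD)
lemma ass_in: "k < tt \<Longrightarrow> ass ! k \<in> {1..3}"
  using len IL finL by (metis ass_def nth_mem set_sorted_list_of_set subsetD)

lemma iss_inj: "k < tt \<Longrightarrow> m < tt \<Longrightarrow> iss ! k = iss ! m \<Longrightarrow> k = m"
  using len distinct_sorted_list_of_set nth_eq_iff_index_eq unfolding iss_def by metis
lemma ass_inj: "k < tt \<Longrightarrow> m < tt \<Longrightarrow> ass ! k = ass ! m \<Longrightarrow> k = m"
  using len distinct_sorted_list_of_set nth_eq_iff_index_eq unfolding ass_def by metis

lemma iss_lt: "k < tt \<Longrightarrow> m < tt \<Longrightarrow> iss ! k < iss ! m \<Longrightarrow> k < m"
  using len sorted_nth_mono sorted_sorted_list_of_set unfolding iss_def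
  by (metis leD linorder_not_less)
lemma ass_lt: "k < m \<Longrightarrow> m < tt \<Longrightarrow> ass ! k < ass ! m"
  using len strict_sorted_list_of_set sorted_wrt_nth_less unfolding ass_def by metis

lemma good_DD: "good DD"
  unfolding good_def DD_def using iss_inj ass_inj iss_lt ass_lt by auto

lemma qminor_eq: "qminor_fa q I L = (\<lambda>u. \<Sum>p\<in>{p. p permutes {..<tt}}. fsmult (cf q p) (mono (wd p)) u)"
  by (simp add: qminor_fa_def Let_def iss_def ass_def tt_def wd_def cf_def fsmult_def)

lemma wd_gens: "p permutes {..<tt} \<Longrightarrow> set (wd p) \<subseteq> gens"
  unfolding wd_def gens_def using iss_in ass_in permutes_in_image[of p "{..<tt}"] by auto

lemma qminor_fa: "qminor_fa q I L \<in> fa_set"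
proof (rule fa_setI)
  let ?P = "{p. p permutes {..<tt}}"
  have sub: "supp (qminor_fa q I L) \<subseteq> wd ` ?P"
  proof
    fix u assume "u \<in> supp (qminor_fa q I L)"
    hence "(\<Sum>p\<in>?P. fsmult (cf q p) (mono (wd p)) u) \<noteq> 0" by (simp add: qminor_eq)
    then obtain p where "p \<in> ?P" "fsmult (cf q p) (mono (wd p)) u \<noteq> 0"
      by (auto elim: sum.not_neutral_contains_not_neutral)
    thus "u \<in> wd ` ?P" by (auto simp: fsmult_def mono_def split: if_splits)
  qed
  show "finite (supp (qminor_fa q I L))"
    by (rule finite_subset[OF sub]) (simp add: finite_permutations)
  fix w assume "qminor_fa q I L w \<noteq> 0"
  thus "set w \<subseteq> gens" using sub wd_gens by blast
qed

lemma qminor_hom: "hom tt (qminor_fa q I L)"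
  unfolding hom_def
proof (intro allI impI)
  fix u assume "qminor_fa q I L u \<noteq> 0"
  hence "(\<Sum>p\<in>{p. p permutes {..<tt}}. fsmult (cf q p) (mono (wd p)) u) \<noteq> 0" by (simp add: qminor_eq)
  then obtain p where "fsmult (cf q p) (mono (wd p)) u \<noteq> 0"
    by (auto elim: sum.not_neutral_contains_not_neutral)
  hence "u = wd p" by (auto simp: fsmult_def mono_def split: if_splits)
  thus "length u = tt" by (simp add: wd_def)
qed

lemma chi_wd: "p permutes {..<tt} \<Longrightarrow> chi DD (wd p) = (if p = id then 1 else 0)"
proof -
  assume p: "p permutes {..<tt}"
  have "set (wd p) \<subseteq> DD \<longleftrightarrow> p = id"
  proof
    assume s: "set (wd p) \<subseteq> DD"
    show "p = id"
    proof
      fix x show "p x = id x"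
      proof (cases "x < tt")
        case True
        have "(iss ! x, ass ! p x) \<in> DD" using s True by (auto simp: wd_def)
        then obtain k where k: "k < tt" "iss ! x = iss ! k" "ass ! p x = ass ! k" by (auto simp: DD_def)
        hence "k = x" using iss_inj True by metis
        moreover have "p x < tt" using permutes_in_image[OF p] True by simp
        ultimately show ?thesis using k ass_inj by simp
      next
        case False thus ?thesis using permutes_not_in[OF p] by simp
      qed
    qed
  next
    assume "p = id" thus "set (wd p) \<subseteq> DD" by (auto simp: wd_def DD_def)
  qed
  thus ?thesis by (simp add: chi_def)
qed

lemma ev_qminor: "ev DD (qminor_fa q I L) = (1 :: 'k::field)"
proof -
  let ?P = "{p. p permutes {..<tt}}"
  have "ev DD (qminor_fa q I L) = (\<Sum>p\<in>?P. ev DD (fsmult (cf q p) (mono (wd p))))"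
    unfolding qminor_eq using ev_sum[of ?P "\<lambda>p. fsmult (cf q p) (mono (wd p))" DD]
    by (simp add: finite_permutations fin_fsmult fin_mono)
  also have "\<dots> = (\<Sum>p\<in>?P. if p = id then cf q p else 0)"
    by (intro sum.cong refl) (simp add: ev_fsmult fin_mono ev_mono chi_wd)
  also have "\<dots> = cf q id" by (simp add: finite_permutations permutes_id)
  also have "\<dots> = 1"
  proof -
    have "{(i, j). i < j \<and> j < tt \<and> id j < id i} = {}" by auto
    hence "card {(i, j). i < j \<and> j < tt \<and> id j < id i} = 0" by (simp only: card.empty)
    thus ?thesis unfolding cf_def by (simp only: power_0)
  qed
  finally show ?thesis .
qed

lemma qminor_notin: "qminor_fa q I L \<notin> ideal q"
proof
  assume "qminor_fa q I L \<in> ideal q"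
  hence "ev DD (qminor_fa q I L) = 0" using ev_ideal ev_rels[OF good_DD] by blast
  thus False using ev_qminor[of q] by simp
qed

end


lemma hpart_hi_low: "hi (n + 1) e \<Longrightarrow> d \<le> n \<Longrightarrow> hpart d e = fzero"
  by (auto simp: hi_def hpart_def fzero_def fun_eq_iff)

lemma cls_fzero_iff: "f \<in> fa_set \<Longrightarrow> cls q f = cls q fzero \<longleftrightarrow> f \<in> ideal q"
proof -
  assume f: "f \<in> fa_set"
  have "fdiff f fzero = f" by (simp add: fdiff_def fzero_def fun_eq_iff)
  thus ?thesis using cls_eq[OF f fzero_fa] by simp
qed

theorem lemma2p1:
  fixes q :: "'k::field" and \<sigma> :: "'k fa set \<Rightarrow> 'k fa set" and I L :: "nat set"
  assumes "q \<noteq> 0" and "\<forall>n>0. q ^ n \<noteq> 1"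
    and "alg_aut q \<sigma>"
    and "\<forall>i\<in>{1..3}. \<forall>a\<in>{1..3}. rsub q (\<sigma> (Y q i a)) (Y q i a) \<in> Rge q 2"
    and "I \<subseteq> {1..3}" and "L \<subseteq> {1..3}" and "card I = card L" and "I \<noteq> {}"
  shows "rsub q (\<sigma> (qminor q I L)) (qminor q I L) \<in> Rge q (card I + 1)
     \<and> (\<sigma> (qminor q I L) = qminor q I L \<longleftrightarrow> rdeg q (\<sigma> (qminor q I L)) = card I)"
proof -
  define m where "m = qminor_fa q I L"
  define t where "t = card I"
  have mfa: "m \<in> fa_set" unfolding m_def by (rule qminor_fa) (use assms in auto)
  have mhom: "hom t m" unfolding m_def t_def using qminor_hom[of I L q] assms by (simp add: tt_def)
  have mnot: "m \<notin> ideal q" unfolding m_def by (rule qminor_notin) (use assms in auto)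
  have M: "qminor q I L = cls q m" by (simp add: qminor_def m_def)
  obtain e where e: "e \<in> fa_set" "hi (t + 1) e" "\<sigma> (cls q m) = cls q (fadd m e)"
    using sig_lin[OF assms(3) assms(4) mfa mhom] by blast
  have hm: "hpart d m = (if d = t then m else fzero)" for d by (rule hpart_hom[OF mhom])
  have me: "fadd m e \<in> fa_set" using mfa e fadd_fa by blast
  have c1: "rsub q (\<sigma> (qminor q I L)) (qminor q I L) \<in> Rge q (t + 1)"
    unfolding M e(3) by (rule decomp_conv[OF mfa e(1,2)])
  have rz: "rzero q = cls q fzero" by (simp add: rzero_def)
  have c2: "\<sigma> (qminor q I L) = qminor q I L \<longleftrightarrow> rdeg q (\<sigma> (qminor q I L)) = t"
  proof
    assume eq: "\<sigma> (qminor q I L) = qminor q I L"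
    have "rcomp q d (qminor q I L) \<noteq> rzero q \<longleftrightarrow> d = t" for d
    proof -
      have "rcomp q d (qminor q I L) = cls q (hpart d m)" unfolding M by (rule rcomp_cls[OF mfa])
      thus ?thesis using hm cls_fzero_iff[OF mfa, of q] mnot rz by auto
    qed
    hence "rdeg q (qminor q I L) = t" unfolding rdeg_def by (intro Greatest_equality) auto
    thus "rdeg q (\<sigma> (qminor q I L)) = t" using eq by simp
  next
    assume deg: "rdeg q (\<sigma> (qminor q I L)) = t"
    show "\<sigma> (qminor q I L) = qminor q I L"
    proof (rule ccontr)
      assume ne: "\<sigma> (qminor q I L) \<noteq> qminor q I L"
      have "fdiff (fadd m e) m = e" by (simp add: fdiff_def fadd_def fun_eq_iff)
      hence enot: "e \<notin> ideal q" using ne cls_eq[OF me mfa, of q] unfolding M e(3) by auto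
      obtain N where N: "\<forall>w. e w \<noteq> 0 \<longrightarrow> length w \<le> N" using fa_bound[OF e(1)] by blast
      obtain N2 where N2: "\<forall>w. fadd m e w \<noteq> 0 \<longrightarrow> length w \<le> N2" using fa_bound[OF me] by blast
      have "\<exists>d. t < d \<and> hpart d e \<notin> ideal q"
      proof (rule ccontr)
        assume "\<not> (\<exists>d. t < d \<and> hpart d e \<notin> ideal q)"
        hence hh: "hpart d e \<in> ideal q" for d
          using hpart_hi_low[OF e(2), of d] ideal.zero[of q] by (cases "t < d") auto
        have "e = (\<lambda>w. \<Sum>d\<le>N. hpart d e w)" by (rule hpart_decomp[OF N])
        also have "\<dots> \<in> ideal q" by (rule ideal_sum) (auto simp: hh)
        finally show False using enot by simp
      qed
      then obtain d where d: "t < d" "hpart d e \<notin> ideal q" by blast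
      have rc: "rcomp q d' (\<sigma> (qminor q I L)) = cls q (hpart d' (fadd m e))" for d'
        unfolding M e(3) by (rule rcomp_cls[OF me])
      have h0: "hpart d m = fzero" using hm[of d] d(1) by simp
      have "hpart d (fadd m e) = fadd (hpart d m) (hpart d e)" by (simp add: hpart_def fadd_def fun_eq_iff)
      hence "hpart d (fadd m e) = hpart d e" using h0 by (simp add: fadd_def fzero_def fun_eq_iff)
      hence Pd: "rcomp q d (\<sigma> (qminor q I L)) \<noteq> rzero q"
        using rc d(2) cls_fzero_iff[OF hpart_fa[OF e(1)], where q=q] rz by simp
      have bnd: "y \<le> N2" if "rcomp q y (\<sigma> (qminor q I L)) \<noteq> rzero q" for y
      proof (rule ccontr)
        assume "\<not> y \<le> N2"
        hence "hpart y (fadd m e) = fzero" using N2 by (auto simp: hpart_def fzero_def fun_eq_iff)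
        thus False using that rc rz by simp
      qed
      have "d \<le> rdeg q (\<sigma> (qminor q I L))" unfolding rdeg_def
        by (rule Greatest_le_nat[of _ d N2]) (use Pd bnd in auto)
      thus False using deg d(1) by simp
    qed
  qed
  show ?thesis using c1 c2 by (simp add: t_def)
qed


end
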